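(* Let $f:\mathbf U\to\mathbf V$ be a map in the set-up, let $P$ be a puzzle piece of $f$, and let $\{x_1,\dots,x_m\}\subset\mathbf V$ be a finite set of points with $x_i\in D(P)\setminus P$ for $1\le i\le m$. Write $k_i=k(x_i)\ge1$, so that $f^{k_i}(\mathcal L_{x_i}(P))=P$. Then (1) for every $1\le i\le m$ and every $0\le j<k_i$, either $f^j(\mathcal L_{x_i}(P))=\mathcal L_{x_s}(P)$ for some $1\le s\le m$, or $f^j(\mathcal L_{x_i}(P))\cap\mathcal L_{x_t}(P)=\emptyset$ for all $1\le t\le m$; (2) $\bigcup_{i=1}^m\mathcal L_{x_i}(P)\cup P$ is a nice set.
   Context: A map in the set-up: $\mathbf V$ is a disjoint union of finitely many Jordan domains in $\mathbb C$ with pairwise disjoint quasicircle boundaries; $\mathbf U$ is compactly contained in $\mathbf V$ and is a union of finitely many Jordan domains with pairwise disjoint closures; $f:\mathbf U\to\mathbf V$ is a proper holomorphic map all of whose critical points lie in $\mathcal K_f:=\{z\in\mathbf U: f^n(z)\in\mathbf U\ \forall n\ge0\}$, and each component of $\mathbf V$ contains at most one component of $\mathcal K_f$ containing critical points. Puzzle pieces of depth $n\ge0$ are the components of $f^{-n}(\mathbf V)$. A finite union $X$ of puzzle pieces is nice if for all $z\in\partial X$ and $n\ge1$, $f^n(z)\notin X$ whenever defined. $\mathrm{Comp}_z(A)$ is the component of an open set $A$ containing $z$. For a finite union $X$ of puzzle pieces, $D(X)=\{z\in\mathbf V:\exists k\ge0,\ f^k(z)\in X\}$; for $z\in D(X)\setminus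 X$, $k(z)$ is the least positive integer with $f^{k(z)}(z)\in X$, and $\mathcal L_z(X):=\mathrm{Comp}_z\big(f^{-k(z)}(\mathrm{Comp}_{f^{k(z)}(z)}(X))\big)$. *)

theory Defs
  imports "HOL-Complex_Analysis.Complex_Analysis"
begin

text \<open>Metric definition of a quasiconformal homeomorphism of the plane:
  a homeomorphism h of C whose linear dilatation
  H_h(z) = limsup_{r->0+} max_{|w-z|=r}|h w - h z| / min_{|w-z|=r}|h w - h z|
  is bounded uniformly in z.\<close>

definition qc_homeomorphism :: "(complex \<Rightarrow> complex) \<Rightarrow> bool" where
  "qc_homeomorphism h \<longleftrightarrow>
     (\<exists>g. homeomorphism UNIV UNIV h g) \<and>
     (\<exists>H::real. \<forall>z. Limsup (at_right (0::real))
        (\<lambda>r. ereal (Sup ((\<lambda>w. cmod (h w - h z)) ` sphere z r)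
                    / Inf ((\<lambda>w. cmod (h w - h z)) ` sphere z r))) \<le> ereal H)"

definition quasicircle :: "complex set \<Rightarrow> bool" where
  "quasicircle Q \<longleftrightarrow> (\<exists>h. qc_homeomorphism h \<and> Q = h ` sphere 0 1)"

definition jordan_domain :: "complex set \<Rightarrow> bool" where
  "jordan_domain D \<longleftrightarrow>
     (\<exists>c. simple_path c \<and> pathfinish c = pathstart c \<and> D = inside (path_image c))"

text \<open>Iterates f^n are defined at z when z, f z, ..., f^(n-1) z lie in U.
  preim f U n A is f^{-n}(A).\<close>

definition preim :: "(complex \<Rightarrow> complex) \<Rightarrow> complex set \<Rightarrow> nat \<Rightarrow> complex set \<Rightarrow> complex set" where
  "preim f U n A = {z. (\<forall>j<n. (f ^^ j) z \<in> U) \<and> (f ^^ n) z \<in> A}"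

definition filled_set :: "(complex \<Rightarrow> complex) \<Rightarrow> complex set \<Rightarrow> complex set" where
  "filled_set f U = {z \<in> U. \<forall>n. (f ^^ n) z \<in> U}"

definition critical_point :: "(complex \<Rightarrow> complex) \<Rightarrow> complex set \<Rightarrow> complex \<Rightarrow> bool" where
  "critical_point f U z \<longleftrightarrow> z \<in> U \<and> deriv f z = 0"

definition in_setup :: "(complex \<Rightarrow> complex) \<Rightarrow> complex set \<Rightarrow> complex set \<Rightarrow> bool" where
  "in_setup f U V \<longleftrightarrow>
     (\<exists>\<V>. finite \<V> \<and> V = \<Union>\<V> \<and>
        (\<forall>D\<in>\<V>. jordan_domain D \<and> quasicircle (frontier D)) \<and>
        pairwise (\<lambda>A B. A \<inter> B = {} \<and> frontier A \<inter> frontier B = {}) \<V>) \<and>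
     (\<exists>\<U>. finite \<U> \<and> U = \<Union>\<U> \<and> (\<forall>D\<in>\<U>. jordan_domain D) \<and>
        pairwise (\<lambda>A B. closure A \<inter> closure B = {}) \<U>) \<and>
     compact (closure U) \<and> closure U \<subseteq> V \<and>
     f holomorphic_on U \<and> f ` U \<subseteq> V \<and>
     (\<forall>K. compact K \<and> K \<subseteq> V \<longrightarrow> compact {z \<in> U. f z \<in> K}) \<and>
     (\<forall>z. critical_point f U z \<longrightarrow> z \<in> filled_set f U) \<and>
     (\<forall>C\<in>components V. \<forall>c1 c2.
        critical_point f U c1 \<and> critical_point f U c2 \<and> c1 \<in> C \<and> c2 \<in> C \<longrightarrow>
        connected_component (filled_set f U) c1 c2)"

definition puzzle_piece :: "(complex \<Rightarrow> complex) \<Rightarrow> complex set \<Rightarrow> complex set \<Rightarrow> complex set \<Rightarrow> bool" where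
  "puzzle_piece f U V P \<longleftrightarrow> (\<exists>n. P \<in> components (preim f U n V))"

definition nice :: "(complex \<Rightarrow> complex) \<Rightarrow> complex set \<Rightarrow> complex set \<Rightarrow> complex set \<Rightarrow> bool" where
  "nice f U V X \<longleftrightarrow>
     (\<exists>\<P>. finite \<P> \<and> (\<forall>P\<in>\<P>. puzzle_piece f U V P) \<and> X = \<Union>\<P>) \<and>
     (\<forall>z\<in>frontier X. \<forall>n\<ge>1. (\<forall>j<n. (f ^^ j) z \<in> U) \<longrightarrow> (f ^^ n) z \<notin> X)"

definition Comp :: "complex \<Rightarrow> complex set \<Rightarrow> complex set" where
  "Comp z A = connected_component_set A z"

definition domD :: "(complex \<Rightarrow> complex) \<Rightarrow> complex set \<Rightarrow> complex set \<Rightarrow> complex set \<Rightarrow> complex set" where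
  "domD f U V X = {z \<in> V. \<exists>k. (\<forall>j<k. (f ^^ j) z \<in> U) \<and> (f ^^ k) z \<in> X}"

definition entry_time :: "(complex \<Rightarrow> complex) \<Rightarrow> complex set \<Rightarrow> complex set \<Rightarrow> complex \<Rightarrow> nat" where
  "entry_time f U X z = (LEAST k. k \<ge> 1 \<and> (\<forall>j<k. (f ^^ j) z \<in> U) \<and> (f ^^ k) z \<in> X)"

definition Lz :: "(complex \<Rightarrow> complex) \<Rightarrow> complex set \<Rightarrow> complex set \<Rightarrow> complex \<Rightarrow> complex set" where
  "Lz f U X z = (let k = entry_time f U X z in
      Comp z (preim f U k (Comp ((f ^^ k) z) X)))"

end

theory Submission
  imports Defs
begin

lemma preim_Suc: "preim f U (Suc n) A = U \<inter> f -` preim f U n A"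
  unfolding preim_def
  by (auto simp: funpow_Suc_right less_Suc_eq_0_disj simp del: funpow.simps)

lemma preim_open:
  assumes "open U" "continuous_on U f" "open A"
  shows "open (preim f U n A)"
proof (induction n)
  case 0 then show ?case using assms by (simp add: preim_def)
next
  case (Suc n)
  then show ?case using assms unfolding preim_Suc
    by (metis Int_commute continuous_on_open_vimage)
qed

lemma funpow_cont:
  assumes "continuous_on U f"
  shows "continuous_on (preim f U n UNIV) (f ^^ n)"
proof (induction n)
  case 0 then show ?case by (simp add: preim_def)
next
  case (Suc n)
  have "continuous_on (U \<inter> f -` preim f U n UNIV) ((f ^^ n) \<circ> f)"
    by (rule continuous_on_compose) (auto intro: continuous_on_subset[OF assms] continuous_on_subset[OF Suc])
  then show ?case unfolding preim_Suc funpow_Suc_right .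
qed

lemma preim_add: "preim f U (a + b) A = preim f U a (preim f U b A)"
proof (induction a)
  case 0 then show ?case by (simp add: preim_def)
next
  case (Suc a)
  then show ?case by (simp add: preim_Suc)
qed

lemma preim_mono: "A \<subseteq> B \<Longrightarrow> preim f U n A \<subseteq> preim f U n B"
  unfolding preim_def by auto

lemma preim_subV: "U \<subseteq> V \<Longrightarrow> A \<subseteq> V \<Longrightarrow> preim f U n A \<subseteq> V"
  by (cases n) (auto simp: preim_Suc, auto simp: preim_def)

lemma preim_dom: "preim f U n A \<subseteq> preim f U n UNIV"
  by (rule preim_mono) auto

lemma preim_iff: "z \<in> preim f U n A \<longleftrightarrow> (\<forall>j<n. (f ^^ j) z \<in> U) \<and> (f ^^ n) z \<in> A"
  by (simp add: preim_def)

lemma jordan_open: "jordan_domain D \<Longrightarrow> open D"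
  unfolding jordan_domain_def
  by (metis closed_path_image open_inside simple_path_imp_path)

lemma proper_surj:
  fixes f :: "complex \<Rightarrow> complex"
  assumes oU: "open U" and hol: "f holomorphic_on U" and UV: "U \<subseteq> V"
    and prp: "\<forall>K. compact K \<and> K \<subseteq> V \<longrightarrow> compact {z \<in> U. f z \<in> K}"
    and oC: "open C" and cC: "connected C" and CV: "C \<subseteq> V"
    and aU: "a \<in> U" and faC: "f a \<in> C"
  shows "f ` connected_component_set {z \<in> U. f z \<in> C} a = C"
proof -
  define T where "T = {z \<in> U. f z \<in> C}"
  define A where "A = connected_component_set T a"
  have cont: "continuous_on U f" using hol holomorphic_on_imp_continuous_on by blast
  have "T = f -` C \<inter> U" unfolding T_def by auto
  then have oT: "open T"
    using continuous_on_open_vimage[OF oU] cont oC by metis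
  have oA: "open A" unfolding A_def using oT open_connected_component by blast
  have cA: "connected A" unfolding A_def by simp
  have aA: "a \<in> A" unfolding A_def T_def using aU faC by simp
  have AT: "A \<subseteq> T" unfolding A_def by (rule connected_component_subset)
  have AU: "A \<subseteq> U" using AT T_def by auto
  obtain F where cF: "closed F" and AF: "A = T \<inter> F"
    using closedin_connected_component[of T a] unfolding A_def closedin_closed by blast
  have nc: "\<not> f constant_on A"
  proof
    assume "f constant_on A"
    then obtain c where c: "\<And>x. x \<in> A \<Longrightarrow> f x = c" unfolding constant_on_def by blast
    define M where "M = {z \<in> U. f z \<in> {c}}"
    have "c \<in> C" using c aA faC by auto
    then have "compact M" unfolding M_def using prp[rule_format, of "{c}"] CV by auto
    have "A = M \<inter> F"
    proof
      show "A \<subseteq> M \<inter> F" using AF c AU unfolding M_def by auto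
      show "M \<inter> F \<subseteq> A" using AF \<open>c \<in> C\<close> unfolding M_def T_def by auto
    qed
    then have "compact A" using \<open>compact M\<close> cF by auto
    then have "closed A" by (rule compact_imp_closed)
    then have "A = {} \<or> A = UNIV" using oA clopen[of A] by simp
    then have "A = UNIV" using aA by auto
    then show False using \<open>compact A\<close> by simp
  qed
  have ofA: "open (f ` A)"
    by (rule open_mapping_thm[OF holomorphic_on_subset[OF hol AU] oA cA oA order_refl nc])
  have fAC: "f ` A \<subseteq> C" using AT T_def by auto
  have cl: "f ` A = C \<inter> closure (f ` A)"
  proof
    show "f ` A \<subseteq> C \<inter> closure (f ` A)" using fAC closure_subset[of "f ` A"] by (simp only: Int_greatest)
  next
    show "C \<inter> closure (f ` A) \<subseteq> f ` A"
    proof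
      fix q assume q: "q \<in> C \<inter> closure (f ` A)"
      have "q \<in> C" using q by simp
      then obtain r where r: "r > 0" "cball q r \<subseteq> C" using oC open_contains_cball by metis
      define M where "M = {z \<in> U. f z \<in> cball q r}"
      have "compact M" unfolding M_def by (rule prp[rule_format]) (use r CV in auto)
      have MT: "M \<subseteq> T" unfolding M_def T_def using r by auto
      have "compact (M \<inter> F)" using \<open>compact M\<close> cF by auto
      moreover have "continuous_on (M \<inter> F) f"
        using cont by (rule continuous_on_subset) (auto simp: M_def)
      ultimately have "compact (f ` (M \<inter> F))" by (rule compact_continuous_image[rotated])
      then have clo: "closed (f ` (M \<inter> F))" by (rule compact_imp_closed)
      have sub: "ball q r \<inter> f ` A \<subseteq> f ` (M \<inter> F)"
      proof
        fix y assume "y \<in> ball q r \<inter> f ` A"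
        then obtain a' where "a' \<in> A" "y = f a'" "f a' \<in> ball q r" by auto
        then have "a' \<in> M \<inter> F" using AF AU unfolding M_def by auto
        then show "y \<in> f ` (M \<inter> F)" using \<open>y = f a'\<close> by auto
      qed
      have "q \<in> ball q r \<inter> closure (f ` A)" using q r by auto
      also have "\<dots> \<subseteq> closure (ball q r \<inter> f ` A)" by (rule open_Int_closure_subset) simp
      also have "\<dots> \<subseteq> f ` (M \<inter> F)" using sub clo by (rule closure_minimal)
      also have "\<dots> \<subseteq> f ` A" by (rule image_mono) (use MT AF in blast)
      finally show "q \<in> f ` A" .
    qed
  qed
  have op: "openin (top_of_set C) (f ` A)" unfolding openin_open using ofA fAC by blast
  have cl': "closedin (top_of_set C) (f ` A)"
    unfolding closedin_closed using cl by blast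
  have "f ` A = {} \<or> f ` A = C"
    using cC[unfolded connected_clopen, rule_format, OF conjI[OF op cl']] .
  then have "f ` A = C" using aA by blast
  then show ?thesis unfolding A_def T_def .
qed

lemma comp_image:
  fixes f :: "complex \<Rightarrow> complex"
  assumes oU: "open U" and hol: "f holomorphic_on U" and UV: "U \<subseteq> V"
    and prp: "\<forall>K. compact K \<and> K \<subseteq> V \<longrightarrow> compact {z \<in> U. f z \<in> K}"
    and oB: "open B" and BV: "B \<subseteq> V"
  shows "a \<in> preim f U (i + m) B \<Longrightarrow>
    (f ^^ i) ` connected_component_set (preim f U (i + m) B) a
      = connected_component_set (preim f U m B) ((f ^^ i) a)"
proof (induction i arbitrary: a)
  case 0 then show ?case by simp
next
  case (Suc i a)
  have cont: "continuous_on U f" using hol holomorphic_on_imp_continuous_on by blast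
  define D where "D = preim f U (i + m) B"
  have eqdom: "preim f U (Suc i + m) B = U \<inter> f -` D" unfolding D_def by (simp add: preim_Suc)
  have aU: "a \<in> U" and faD: "f a \<in> D" using Suc.prems eqdom by auto
  define C where "C = connected_component_set D (f a)"
  have oD: "open D" unfolding D_def using preim_open[OF oU cont oB] .
  have oC: "open C" unfolding C_def using oD open_connected_component by blast
  have cC: "connected C" unfolding C_def by simp
  have faC: "f a \<in> C" unfolding C_def using faD by simp
  have CD: "C \<subseteq> D" unfolding C_def by (rule connected_component_subset)
  have DV: "D \<subseteq> V" unfolding D_def using preim_subV[OF UV BV] .
  define A where "A = connected_component_set (preim f U (Suc i + m) B) a"
  have AC: "A = connected_component_set {z \<in> U. f z \<in> C} a"
  proof
    have aA: "a \<in> A" unfolding A_def using Suc.prems by simp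
    have cA: "connected A" unfolding A_def by simp
    have AUD: "A \<subseteq> U \<inter> f -` D" unfolding A_def eqdom[symmetric] by (rule connected_component_subset)
    have "connected (f ` A)"
      by (rule connected_continuous_image[OF continuous_on_subset[OF cont] cA]) (use AUD in blast)
    moreover have "f ` A \<subseteq> D" using AUD by blast
    ultimately have "f ` A \<subseteq> C" unfolding C_def
      using connected_component_maximal[of "f a" "f ` A" D] aA by blast
    then have "A \<subseteq> {z \<in> U. f z \<in> C}" using AUD by blast
    then show "A \<subseteq> connected_component_set {z \<in> U. f z \<in> C} a"
      using connected_component_maximal[OF aA cA] by blast
  next
    have "{z \<in> U. f z \<in> C} \<subseteq> preim f U (Suc i + m) B" unfolding eqdom using CD by blast
    then show "connected_component_set {z \<in> U. f z \<in> C} a \<subseteq> A"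
      unfolding A_def by (rule connected_component_mono)
  qed
  have fA: "f ` A = C" unfolding AC
    by (rule proper_surj[OF oU hol UV prp oC cC subset_trans[OF CD DV] aU faC])
  have "(f ^^ Suc i) ` A = (f ^^ i) ` (f ` A)"
    by (simp add: funpow_Suc_right image_comp del: funpow.simps)
  also have "\<dots> = connected_component_set (preim f U m B) ((f ^^ i) (f a))"
    unfolding fA C_def D_def using Suc.IH faD D_def by blast
  also have "(f ^^ i) (f a) = (f ^^ Suc i) a" by (simp add: funpow_Suc_right del: funpow.simps)
  finally show ?case unfolding A_def .
qed

lemma setup_facts:
  assumes "in_setup f U V"
  shows "open U" "open V" "U \<subseteq> V" "f holomorphic_on U"
    "\<forall>K. compact K \<and> K \<subseteq> V \<longrightarrow> compact {z \<in> U. f z \<in> K}"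
proof -
  from assms obtain \<V> \<U> where
    V: "V = \<Union>\<V>" "\<forall>D\<in>\<V>. jordan_domain D \<and> quasicircle (frontier D)" and
    U: "U = \<Union>\<U>" "\<forall>D\<in>\<U>. jordan_domain D" and
    r: "closure U \<subseteq> V" "f holomorphic_on U"
       "\<forall>K. compact K \<and> K \<subseteq> V \<longrightarrow> compact {z \<in> U. f z \<in> K}"
    using assms unfolding in_setup_def by (elim conjE exE) blast
  show "open U" unfolding U(1) by (rule open_Union) (use U(2) jordan_open in blast)
  show "open V" unfolding V(1) by (rule open_Union) (use V(2) jordan_open in blast)
  show "U \<subseteq> V" using r closure_subset by blast
  show "f holomorphic_on U" using r by blast
  show "\<forall>K. compact K \<and> K \<subseteq> V \<longrightarrow> compact {z \<in> U. f z \<in> K}" using r by blast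
qed

lemma preim_deep:
  assumes "U \<subseteq> V" "1 \<le> r"
  shows "preim f U r (preim f U n V) \<subseteq> preim f U n V"
proof -
  have "preim f U r V \<subseteq> V"
    using assms by (cases r) (auto simp: preim_Suc)
  then have "preim f U n (preim f U r V) \<subseteq> preim f U n V" by (rule preim_mono)
  moreover have "preim f U r (preim f U n V) = preim f U n (preim f U r V)"
    by (metis preim_add add.commute)
  ultimately show ?thesis by simp
qed

theorem lemma7p7:
  fixes f :: "complex \<Rightarrow> complex" and U V P :: "complex set" and S :: "complex set"
  assumes "in_setup f U V"
    and "puzzle_piece f U V P"
    and "finite S" and "S \<subseteq> V"
    and "S \<subseteq> domD f U V P - P"
  shows "(\<forall>x\<in>S. \<forall>j < entry_time f U P x.
            (\<exists>y\<in>S. (f ^^ j) ` Lz f U P x = Lz f U P y) \<or>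
            (\<forall>y\<in>S. (f ^^ j) ` Lz f U P x \<inter> Lz f U P y = {}))
      \<and> nice f U V ((\<Union>x\<in>S. Lz f U P x) \<union> P)"
proof -
  note sf = setup_facts[OF assms(1)]
  have oU: "open U" and oV: "open V" and UV: "U \<subseteq> V" and hol: "f holomorphic_on U"
    and prp: "\<forall>K. compact K \<and> K \<subseteq> V \<longrightarrow> compact {z \<in> U. f z \<in> K}" using sf by blast+
  have cont: "continuous_on U f" using hol holomorphic_on_imp_continuous_on by blast
  obtain n where Pc: "P \<in> components (preim f U n V)"
    using assms(2) unfolding puzzle_piece_def by blast
  define D where "D = preim f U n V"
  have oD: "open D" unfolding D_def using preim_open[OF oU cont oV] .
  have PD: "P \<subseteq> D" unfolding D_def using Pc by (rule in_components_subset)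
  have cP: "connected P" using Pc by (rule in_components_connected)
  obtain p0 where p0: "P = connected_component_set D p0" using Pc unfolding D_def by (elim componentsE) blast
  have Pcomp: "connected_component_set D p = P" if "p \<in> P" for p
    using that p0 connected_component_eq by blast
  have Pmax: "C \<subseteq> P" if "connected C" "C \<subseteq> D" "p \<in> C" "p \<in> P" for C p
    using connected_component_maximal[OF that(3,1,2)] Pcomp[OF that(4)] by simp
  have oP: "open P" unfolding p0 using oD open_connected_component by blast
  have DV: "D \<subseteq> V" unfolding D_def using preim_subV[OF UV order_refl] .
  have PV: "P \<subseteq> V" using PD DV by blast
  have deep: "preim f U r D \<subseteq> D" if "1 \<le> r" for r
    unfolding D_def using preim_deep[OF UV that] .
  have deepP: "preim f U r P \<subseteq> D" if "1 \<le> r" for r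
    using deep[OF that] preim_mono[OF PD, of f U r] by blast
  have PclD: "z \<in> P" if "z \<in> D" "z \<in> closure P" for z
  proof -
    obtain F where "closed F" "P = D \<inter> F"
      using closedin_connected_component[of D p0] unfolding p0[symmetric] closedin_closed by blast
    then show ?thesis using that closure_minimal[of P F] by blast
  qed
  have Pnice: False if "z \<in> closure P" "z \<notin> P" "1 \<le> m" "z \<in> preim f U m P" for z m
  proof -
    have "z \<in> D" using deepP[OF that(3)] that(4) by (rule subsetD)
    then show False using PclD that(1,2) by blast
  qed
  define k where "k = entry_time f U P"
  have ent: "1 \<le> k x \<and> (\<forall>j<k x. (f ^^ j) x \<in> U) \<and> (f ^^ k x) x \<in> P" if "x \<in> S" for x
  proof -
    have "x \<in> domD f U V P" using that assms(5) by blast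
    then obtain k0 where k0: "\<forall>j<k0. (f ^^ j) x \<in> U" "(f ^^ k0) x \<in> P"
      unfolding domD_def by blast
    have "x \<notin> P" using that assms(5) by blast
    have "k0 \<noteq> 0"
    proof
      assume "k0 = 0"
      then show False using k0(2) \<open>x \<notin> P\<close> by simp
    qed
    then have "1 \<le> k0 \<and> (\<forall>j<k0. (f ^^ j) x \<in> U) \<and> (f ^^ k0) x \<in> P" using k0 by simp
    then show ?thesis unfolding k_def entry_time_def
      by (rule LeastI[where P = "\<lambda>k. 1 \<le> k \<and> (\<forall>j<k. (f ^^ j) x \<in> U) \<and> (f ^^ k) x \<in> P"])
  qed
  have entmin: "k x \<le> i" if "1 \<le> i" "\<forall>j<i. (f ^^ j) x \<in> U" "(f ^^ i) x \<in> P" for x i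
    unfolding k_def entry_time_def
    by (rule Least_le[where P = "\<lambda>k. 1 \<le> k \<and> (\<forall>j<k. (f ^^ j) x \<in> U) \<and> (f ^^ k) x \<in> P"])
       (use that in blast)
  define L where "L x = connected_component_set (preim f U (k x) P) x" for x
  have Lz: "Lz f U P x = L x" if "x \<in> S" for x
  proof -
    have "connected_component_set P ((f ^^ k x) x) = P"
      using connected_component_eq_self[OF cP] ent[OF that] by blast
    then have "Comp ((f ^^ k x) x) P = P" unfolding Comp_def .
    moreover have "Lz f U P x = Comp x (preim f U (k x) (Comp ((f ^^ k x) x) P))"
      unfolding Lz_def k_def Let_def ..
    ultimately show ?thesis unfolding L_def Comp_def by simp
  qed
  have xL: "x \<in> L x" if "x \<in> S" for x
    unfolding L_def using ent[OF that] by (simp add: preim_iff)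
  have LP: "L x \<subseteq> preim f U (k x) P" for x
    unfolding L_def by (rule connected_component_subset)
  have oL: "open (L x)" for x
    unfolding L_def using preim_open[OF oU cont oP] open_connected_component by blast
  have cL: "connected (L x)" for x unfolding L_def by simp
  have noearly: False if "x \<in> S" "w \<in> L x" "1 \<le> i" "i < k x" "(f ^^ i) w \<in> P" for x w i
  proof -
    have Ldom: "L x \<subseteq> preim f U i UNIV"
    proof
      fix w' assume "w' \<in> L x"
      then have "w' \<in> preim f U (k x) P" using LP by blast
      then show "w' \<in> preim f U i UNIV" using \<open>i < k x\<close> by (simp add: preim_iff)
    qed
    have "connected ((f ^^ i) ` L x)"
      by (rule connected_continuous_image[OF continuous_on_subset[OF funpow_cont[OF cont] Ldom] cL])
    moreover have "(f ^^ i) ` L x \<subseteq> D"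
    proof
      fix u assume "u \<in> (f ^^ i) ` L x"
      then obtain w' where w': "w' \<in> L x" "u = (f ^^ i) w'" by blast
      have "preim f U (k x) P = preim f U i (preim f U (k x - i) P)"
        using preim_add[of f U i "k x - i" P] \<open>i < k x\<close> by simp
      then have "w' \<in> preim f U i (preim f U (k x - i) P)" using w' LP by blast
      then have "u \<in> preim f U (k x - i) P" unfolding w'(2) preim_def[of f U i] by simp
      moreover have "1 \<le> k x - i" using \<open>i < k x\<close> by simp
      ultimately show "u \<in> D" using deepP by blast
    qed
    ultimately have "(f ^^ i) ` L x \<subseteq> P"
      using Pmax[of "(f ^^ i) ` L x" "(f ^^ i) w"] that(2,5) by blast
    then have "(f ^^ i) x \<in> P" using xL[OF that(1)] by blast
    moreover have "\<forall>j<i. (f ^^ j) x \<in> U" using ent[OF that(1)] \<open>i < k x\<close> by auto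
    ultimately have "k x \<le> i" using entmin \<open>1 \<le> i\<close> by blast
    then show False using \<open>i < k x\<close> by simp
  qed
  have part1: "\<forall>x\<in>S. \<forall>j < k x.
            (\<exists>y\<in>S. (f ^^ j) ` L x = L y) \<or> (\<forall>y\<in>S. (f ^^ j) ` L x \<inter> L y = {})"
  proof (intro ballI allI impI)
    fix x j assume x: "x \<in> S" and j: "j < k x"
    show "(\<exists>y\<in>S. (f ^^ j) ` L x = L y) \<or> (\<forall>y\<in>S. (f ^^ j) ` L x \<inter> L y = {})"
    proof (cases "j = 0")
      case True then show ?thesis using x by auto
    next
      case False
      note j0 = this
      have eqk: "j + (k x - j) = k x" using j by simp
      have xin: "x \<in> preim f U (j + (k x - j)) P" unfolding eqk using xL[OF x] LP by blast
      have Q: "(f ^^ j) ` L x = connected_component_set (preim f U (k x - j) P) ((f ^^ j) x)"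
        using comp_image[OF oU hol UV prp oP PV xin] unfolding eqk L_def .
      show ?thesis
      proof (cases "\<forall>y\<in>S. (f ^^ j) ` L x \<inter> L y = {}")
        case True then show ?thesis by blast
      next
        case False
        then obtain y z where y: "y \<in> S" and zQ: "z \<in> (f ^^ j) ` L x" and zL: "z \<in> L y" by blast
        then obtain w where w: "w \<in> L x" "z = (f ^^ j) w" by blast
        have wk: "w \<in> preim f U (j + (k x - j)) P" unfolding eqk using w LP by blast
        then have "w \<in> preim f U j (preim f U (k x - j) P)" unfolding preim_add .
        then have zin: "z \<in> preim f U (k x - j) P" unfolding w(2) preim_def[of f U j] by simp
        have zy: "z \<in> preim f U (k y) P" using zL LP by blast
        have "k y = k x - j"
        proof (rule ccontr)
          assume ne: "k y \<noteq> k x - j"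
          show False
          proof (cases "k x - j < k y")
            case True
            have "(f ^^ (k x - j)) z \<in> P" using zin by (simp add: preim_iff)
            moreover have "1 \<le> k x - j" using j by simp
            ultimately show False using noearly[OF y zL _ True] by blast
          next
            case False
            then have lt: "k y < k x - j" using ne by simp
            have "(f ^^ (k y)) z \<in> P" using zy by (simp add: preim_iff)
            moreover have "(f ^^ (k y + j)) w = (f ^^ (k y)) ((f ^^ j) w)" by (simp add: funpow_add)
            ultimately have "(f ^^ (j + k y)) w \<in> P" using w(2) by (simp add: add.commute)
            moreover have "1 \<le> j + k y" "j + k y < k x" using lt j0 by auto
            ultimately show False using noearly[OF x w(1)] by blast
          qed
        qed
        have "L y = connected_component_set (preim f U (k y) P) z"
          using zL connected_component_eq unfolding L_def by metis
        then have Ly: "L y = connected_component_set (preim f U (k x - j) P) z"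
          using \<open>k y = k x - j\<close> by simp
        have "(f ^^ j) ` L x = connected_component_set (preim f U (k x - j) P) z"
          using Q zQ connected_component_eq by metis
        then show ?thesis using y Ly by auto
      qed
    qed
  qed
  have Lpiece: "L x \<in> components (preim f U (k x + n) V)" if "x \<in> S" for x
  proof -
    have eq: "preim f U (k x + n) V = preim f U (k x) D" unfolding D_def by (rule preim_add)
    have xD: "x \<in> preim f U (k x) D" using xL[OF that] LP preim_mono[OF PD] by blast
    define C' where "C' = connected_component_set (preim f U (k x) D) x"
    have "L x \<subseteq> C'" unfolding L_def C'_def by (rule connected_component_mono[OF preim_mono[OF PD]])
    moreover have "C' \<subseteq> L x"
    proof -
      have C'sub: "C' \<subseteq> preim f U (k x) D" unfolding C'_def by (rule connected_component_subset)
      have C'dom: "C' \<subseteq> preim f U (k x) UNIV" using C'sub preim_dom by blast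
      have "connected ((f ^^ k x) ` C')"
        by (rule connected_continuous_image[OF continuous_on_subset[OF funpow_cont[OF cont] C'dom]])
           (simp add: C'_def)
      moreover have "(f ^^ k x) ` C' \<subseteq> D" using C'sub by (auto simp: preim_iff)
      moreover have xC: "x \<in> C'" unfolding C'_def using xD by simp
      moreover have "(f ^^ k x) x \<in> P" using ent[OF that] by blast
      ultimately have "(f ^^ k x) ` C' \<subseteq> P" using Pmax by blast
      then have "C' \<subseteq> preim f U (k x) P"
      proof (intro subsetI)
        fix w assume "(f ^^ k x) ` C' \<subseteq> P" "w \<in> C'"
        then have "w \<in> preim f U (k x) UNIV" "(f ^^ k x) w \<in> P" using C'dom by blast+
        then show "w \<in> preim f U (k x) P" by (simp add: preim_iff)
      qed
      then show ?thesis unfolding L_def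
        using connected_component_maximal[of x C'] xC by (simp add: C'_def)
    qed
    ultimately have "L x = connected_component_set (preim f U (k x + n) V) x" unfolding eq C'_def by blast
    then show ?thesis using componentsI xD eq by metis
  qed
  have part2: "nice f U V ((\<Union>x\<in>S. L x) \<union> P)"
    unfolding nice_def
  proof (intro conjI)
    show "\<exists>\<P>. finite \<P> \<and> (\<forall>P\<in>\<P>. puzzle_piece f U V P) \<and> (\<Union>x\<in>S. L x) \<union> P = \<Union>\<P>"
    proof (rule exI[of _ "insert P (L ` S)"], intro conjI)
      show "finite (insert P (L ` S))" using assms(3) by simp
      show "\<forall>Q\<in>insert P (L ` S). puzzle_piece f U V Q"
        using assms(2) Lpiece unfolding puzzle_piece_def by blast
      show "(\<Union>x\<in>S. L x) \<union> P = \<Union>(insert P (L ` S))" by blast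
    qed
  next
    define X where "X = (\<Union>x\<in>S. L x) \<union> P"
    have oX: "open X" unfolding X_def using oL oP by blast
    show "\<forall>z\<in>frontier ((\<Union>x\<in>S. L x) \<union> P). \<forall>m\<ge>1. (\<forall>j<m. (f ^^ j) z \<in> U)
            \<longrightarrow> (f ^^ m) z \<notin> (\<Union>x\<in>S. L x) \<union> P"
      unfolding X_def[symmetric]
    proof (intro ballI allI impI notI)
      fix z m assume zf: "z \<in> frontier X" and m1: "1 \<le> m" and it: "\<forall>j<m. (f ^^ j) z \<in> U"
        and fmX: "(f ^^ m) z \<in> X"
      have zX: "z \<notin> X" and zcl: "z \<in> closure X"
        using zf oX unfolding frontier_def by (auto simp: interior_open)
      obtain m' where m'1: "1 \<le> m'" and zm': "z \<in> preim f U m' P"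
      proof (cases "(f ^^ m) z \<in> P")
        case True
        then have "z \<in> preim f U m P" using it by (simp add: preim_iff)
        then show ?thesis using that m1 by blast
      next
        case False
        then obtain y where "y \<in> S" "(f ^^ m) z \<in> L y" using fmX X_def by blast
        then have "(f ^^ m) z \<in> preim f U (k y) P" using LP by blast
        then have "z \<in> preim f U m (preim f U (k y) P)" using it by (simp add: preim_def[of f U m])
        then have "z \<in> preim f U (m + k y) P" by (simp add: preim_add)
        moreover have "1 \<le> m + k y" using m1 by simp
        ultimately show ?thesis using that by blast
      qed
      have "closed ((\<Union>x\<in>S. closure (L x)) \<union> closure P)"
        using assms(3) by (intro closed_Un closed_UN) auto
      moreover have "X \<subseteq> (\<Union>x\<in>S. closure (L x)) \<union> closure P"
        unfolding X_def using closure_subset by blast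
      ultimately have "closure X \<subseteq> (\<Union>x\<in>S. closure (L x)) \<union> closure P"
        by (rule closure_minimal[rotated])
      then consider "z \<in> closure P" | y where "y \<in> S" "z \<in> closure (L y)" using zcl by blast
      then show False
      proof cases
        case 1
        then show False using Pnice[OF 1 _ m'1 zm'] zX X_def by blast
      next
        case 2
        note y = 2
        have zLy: "z \<notin> L y" using zX X_def y(1) by blast
        show False
        proof (cases "m' < k y")
          case True
          have oO: "open (preim f U m' P)" using preim_open[OF oU cont oP] .
          have "preim f U m' P \<inter> closure (L y) \<noteq> {}" using zm' y(2) by blast
          then have "preim f U m' P \<inter> L y \<noteq> {}" using open_Int_closure_eq_empty[OF oO] by blast
          then obtain w where w: "w \<in> L y" "(f ^^ m') w \<in> P" by (auto simp: preim_iff)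
          then show False using noearly[OF y(1) w(1) m'1 True] by blast
        next
          case False
          define E where "E = preim f U (k y) (UNIV :: complex set)"
          have oE: "open E" unfolding E_def using preim_open[OF oU cont open_UNIV] .
          have zE: "z \<in> E" unfolding E_def using zm' False by (auto simp: preim_iff)
          have contg: "continuous_on E (f ^^ k y)" unfolding E_def by (rule funpow_cont[OF cont])
          have LE: "L y \<subseteq> E" unfolding E_def using LP preim_dom by blast
          have gcl: "(f ^^ k y) z \<in> closure P"
          proof (rule ccontr)
            assume nz: "(f ^^ k y) z \<notin> closure P"
            have "open ((f ^^ k y) -` (- closure P) \<inter> E)"
              using continuous_on_open_vimage[OF oE] contg by blast
            moreover have "z \<in> (f ^^ k y) -` (- closure P) \<inter> E" using nz zE by blast
            ultimately have "((f ^^ k y) -` (- closure P) \<inter> E) \<inter> L y \<noteq> {}"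
              using y(2) open_Int_closure_eq_empty by blast
            then obtain w where "w \<in> L y" "(f ^^ k y) w \<notin> closure P" by blast
            moreover have "w \<in> preim f U (k y) P" using \<open>w \<in> L y\<close> LP by blast
            then have "(f ^^ k y) w \<in> P" by (simp add: preim_iff)
            ultimately show False using closure_subset by blast
          qed
          show False
          proof (cases "(f ^^ k y) z \<in> P")
            case True
            then have zin: "z \<in> preim f U (k y) P" using zE unfolding E_def by (simp add: preim_iff)
            obtain F where "closed F" "L y = preim f U (k y) P \<inter> F"
              using closedin_connected_component[of "preim f U (k y) P" y]
              unfolding L_def[symmetric] closedin_closed by blast
            moreover have "closure (L y) \<subseteq> F" using calculation closure_minimal by blast
            ultimately have "z \<in> L y" using zin y(2) by blast
            then show False using zLy by blast
          next
            case notP: False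
            have ne: "m' \<noteq> k y" using notP zm' by (auto simp: preim_iff)
            have "z \<in> preim f U (k y + (m' - k y)) P" using zm' False by simp
            then have "z \<in> preim f U (k y) (preim f U (m' - k y) P)" by (simp only: preim_add)
            then have uin: "(f ^^ k y) z \<in> preim f U (m' - k y) P" by (simp add: preim_def[of f U "k y"])
            have "1 \<le> m' - k y" using ne False by simp
            then show False using Pnice[OF gcl notP _ uin] by blast
          qed
        qed
      qed
    qed
  qed
  have U1: "(\<Union>x\<in>S. Lz f U P x) = (\<Union>x\<in>S. L x)" using Lz by (meson SUP_cong)
  have p1: "(\<exists>y\<in>S. (f ^^ j) ` Lz f U P x = Lz f U P y) \<or>
            (\<forall>y\<in>S. (f ^^ j) ` Lz f U P x \<inter> Lz f U P y = {})"
    if "x \<in> S" "j < entry_time f U P x" for x j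
  proof -
    have "j < k x" using that(2) unfolding k_def .
    then have "(\<exists>y\<in>S. (f ^^ j) ` L x = L y) \<or> (\<forall>y\<in>S. (f ^^ j) ` L x \<inter> L y = {})"
      using part1 that(1) by blast
    then show ?thesis using Lz that(1) by auto
  qed
  show ?thesis using p1 part2 U1 by auto
qed

end
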